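(* Let $e_1,e_2$ be composable forward events of the LTSI of CCSK$^{\mathrm P}$. Then $e_1<e_2$ if and only if $e_1\otimes e_2$.
   Context: Names $\mathsf N$ with bijection $\overline\cdot$ onto disjoint co-names; $\mathsf L=\mathsf N\cup\overline{\mathsf N}\cup\{\tau\}$ ($\alpha$ over $\mathsf L$, $\lambda$ over $\mathsf L\setminus\{\tau\}$); keys $\mathsf K$ denumerable. CCSK processes $X::=\mathbf 0\mid\alpha.X\mid X\backslash\lambda\mid X+Y\mid X|Y\mid\alpha[k].X$; $\mathrm{keys}(X)$ keys in $X$; standard means no keys. Directions $D\in\{\mathrm L,\mathrm R\}$, $\bar{\mathrm L}=\mathrm R$, $\bar{\mathrm R}=\mathrm L$. Proof keyed labels $\theta::=\upsilon\alpha[k]\mid\upsilon\langle\upsilon_1\lambda[k],\upsilon_2\overline\lambda[k]\rangle$ ($\upsilon,\upsilon_i\in\{|_{\mathrm L},|_{\mathrm R},+_{\mathrm L},+_{\mathrm R}\}^*$), $\ell(\upsilon\alpha[k])=\alpha$, $\ell(\upsilon\langle\cdots\rangle)=\tau$, $\mathrm{key}(\theta)=k$. Forward CCSK$^{\mathrm P}$ transitions: least relation closed under (act) $\alpha.X\xrightarrow{\alpha[k]}\alpha[k].X$ if $\mathrm{keys}(X)=\emptyset$; (pre) $X\xrightarrow\theta X',\mathrm{key}(\theta)\ne k\Rightarrow\alpha[k].X\xrightarrow\theta\alpha[k].X'$; (res) $X\xrightarrow\theta X',\ell(\theta)\notin\{\lambda,\overline\lambda\}\Rightarrow X\backslash\lambda\xrightarrow\theta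 X'\backslash\lambda$; (par) $X\xrightarrow\theta X',\mathrm{key}(\theta)\notin\mathrm{keys}(Y)\Rightarrow X|Y\xrightarrow{|_{\mathrm L}\theta}X'|Y$, $Y|X\xrightarrow{|_{\mathrm R}\theta}Y|X'$; (syn) $X\xrightarrow{\upsilon_1\lambda[k]}X',Y\xrightarrow{\upsilon_2\overline\lambda[k]}Y'\Rightarrow X|Y\xrightarrow{\langle\upsilon_1\lambda[k],\upsilon_2\overline\lambda[k]\rangle}X'|Y'$; (sum) $X\xrightarrow\theta X',\mathrm{keys}(Y)=\emptyset\Rightarrow X+Y\xrightarrow{+_{\mathrm L}\theta}X'+Y$, $Y+X\xrightarrow{+_{\mathrm R}\theta}Y+X'$. Backward transitions are converses; $\bar t$ the inverse. Paths: sequences of composable transitions; rooted if the source cannot perform a backward transition; only processes reachable from standard ones are considered. Connected: path from source of one to target of the other. Relations on proof labels (least closed under rules; "prefix" = form $\beta[k']$; $\theta_{\mathrm L},\theta_{\mathrm R}$ components of a synchronisation label): Connectivity $\frown$: (A1) $\alpha[k]\frown\theta$; (A2) $\theta\frown\alpha[k]$ if $\theta$ not a prefix; (P1) $|_D\theta\frown|_D\theta'$ if $\theta\frown\theta'$; (P2) $|_D\theta\frown|_{\bar D}\theta'$; (C1) $+_D\theta\frown+_D\theta'$ if $\theta\frown\theta'$; (C2) $+_D\theta\frown+_{\bar D}\theta'$; (S1) $|_D\theta\frown\langle\theta_{\mathrm L},\theta_{\mathrm R}\rangle$ if $\theta\frown\theta_D$; (S2) $\langle\theta_{\mathrm L},\theta_{\mathrm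 R}\rangle\frown|_D\theta$ if $\theta_D\frown\theta$; (S3) componentwise. Dependence $\otimes$: A1, A2, C1, C2, P1, S1, S2 with $\otimes$ for $\frown$; (P2$_k$) $|_D\theta\otimes|_{\bar D}\theta'$ if equal keys; (S3) $\langle\theta_1,\theta_2\rangle\otimes\langle\theta_1',\theta_2'\rangle$ if for some $i\ne j$, $\theta_i\otimes\theta_i'$ and $\theta_j\frown\theta_j'$. Independence $\iota$: C1, P1, S1, S2, S3 with $\iota$ for $\frown$, and (P2$_k$) $|_D\theta\mathrel\iota|_{\bar D}\theta'$ if keys differ. On transitions: $t\mathrel\iota u$ iff connected and labels $\iota$. Event equivalence $\sim$: smallest equivalence with $t\sim t'$ whenever $t:P\to Q$, $u:P\to R$, $u':Q\to S$, $t':R\to S$ ($u'$ with label/direction of $u$, $t'$ of $t$) and $t\mathrel\iota u$; events are classes $[t]$; forward events are classes of forward transitions; $\bar e=[\bar t]$. $\sharp(\varepsilon,e)=0$, $\sharp(tr,e)=\sharp(r,e)+1$ if $t\in e$, $-1$ if $t\in\bar e$, unchanged otherwise. For forward events, $e\le e'$ iff every rooted path $r$ with $\sharp(r,e')>0$ has $\sharp(r,e)>0$; $e<e'$ iff $e\le e'$ and $e\ne e'$. Events $e_1,e_2$ are composable if some $t_1\in e_1$ is composable with some $t_2\in e_2$; $e_1\otimes e_2$ iff some $t_1\in e_1$, $t_2\in e_2$ have labels satisfying $\otimes$. *)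

theory Defs
  imports Main
begin

datatype 'n vis = Nm 'n | Co 'n
datatype 'n act = Vis "'n vis" | Tau

fun vbar :: "'n vis \<Rightarrow> 'n vis" where
  "vbar (Nm a) = Co a" | "vbar (Co a) = Nm a"

type_synonym key = nat

datatype 'n proc =
    Nil0
  | Pre "'n act" "'n proc"
  | Res "'n proc" "'n vis"
  | Sum "'n proc" "'n proc"
  | Par "'n proc" "'n proc"
  | Keyed "'n act" key "'n proc"

fun keys :: "'n proc \<Rightarrow> key set" where
  "keys Nil0 = {}"
| "keys (Pre a X) = keys X"
| "keys (Res X l) = keys X"
| "keys (Sum X Y) = keys X \<union> keys Y"
| "keys (Par X Y) = keys X \<union> keys Y"
| "keys (Keyed a k X) = insert k (keys X)"

definition standard :: "'n proc \<Rightarrow> bool" where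
  "standard X \<longleftrightarrow> keys X = {}"

datatype dir = DL | DR

fun dbar :: "dir \<Rightarrow> dir" where "dbar DL = DR" | "dbar DR = DL"

text \<open>A proof keyed label upsilon alpha[k] is encoded as the operators of upsilon
 applied (outermost first) to PAct alpha k; a synchronisation label
 upsilon<theta_L, theta_R> as the operators of upsilon applied to PSyn theta_L theta_R.\<close>

datatype 'n plab =
    PAct "'n act" key
  | PPar dir "'n plab"
  | PSum dir "'n plab"
  | PSyn "'n plab" "'n plab"

fun lab :: "'n plab \<Rightarrow> 'n act" where
  "lab (PAct a k) = a"
| "lab (PPar d t) = lab t"
| "lab (PSum d t) = lab t"
| "lab (PSyn t1 t2) = Tau"

fun pkey :: "'n plab \<Rightarrow> key" where
  "pkey (PAct a k) = k"
| "pkey (PPar d t) = pkey t"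
| "pkey (PSum d t) = pkey t"
| "pkey (PSyn t1 t2) = pkey t1"

definition is_prefix :: "'n plab \<Rightarrow> bool" where
  "is_prefix t \<longleftrightarrow> (\<exists>a k. t = PAct a k)"

fun comp :: "dir \<Rightarrow> 'n plab \<Rightarrow> 'n plab \<Rightarrow> 'n plab" where
  "comp DL tL tR = tL" | "comp DR tL tR = tR"

inductive fwd :: "'n proc \<Rightarrow> 'n plab \<Rightarrow> 'n proc \<Rightarrow> bool" where
  act: "keys X = {} \<Longrightarrow> fwd (Pre a X) (PAct a k) (Keyed a k X)"
| pre: "fwd X t X' \<Longrightarrow> pkey t \<noteq> k \<Longrightarrow> fwd (Keyed a k X) t (Keyed a k X')"
| res: "fwd X t X' \<Longrightarrow> lab t \<noteq> Vis l \<Longrightarrow> lab t \<noteq> Vis (vbar l)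
        \<Longrightarrow> fwd (Res X l) t (Res X' l)"
| parL: "fwd X t X' \<Longrightarrow> pkey t \<notin> keys Y \<Longrightarrow> fwd (Par X Y) (PPar DL t) (Par X' Y)"
| parR: "fwd X t X' \<Longrightarrow> pkey t \<notin> keys Y \<Longrightarrow> fwd (Par Y X) (PPar DR t) (Par Y X')"
| syn: "fwd X t1 X' \<Longrightarrow> fwd Y t2 Y' \<Longrightarrow> lab t1 = Vis l \<Longrightarrow> lab t2 = Vis (vbar l)
        \<Longrightarrow> pkey t1 = k \<Longrightarrow> pkey t2 = k
        \<Longrightarrow> fwd (Par X Y) (PSyn t1 t2) (Par X' Y')"
| sumL: "fwd X t X' \<Longrightarrow> keys Y = {} \<Longrightarrow> fwd (Sum X Y) (PSum DL t) (Sum X' Y)"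
| sumR: "fwd X t X' \<Longrightarrow> keys Y = {} \<Longrightarrow> fwd (Sum Y X) (PSum DR t) (Sum Y X')"

definition step :: "'n proc \<Rightarrow> 'n proc \<Rightarrow> bool" where
  "step P Q \<longleftrightarrow> (\<exists>t. fwd P t Q \<or> fwd Q t P)"

definition reachable :: "'n proc \<Rightarrow> bool" where
  "reachable P \<longleftrightarrow> (\<exists>S. standard S \<and> step\<^sup>*\<^sup>* S P)"

text \<open>A transition: source, proof label, target, and direction (True = forward).\<close>
datatype 'n tr = Tr (src: "'n proc") (lbl: "'n plab") (tgt: "'n proc") (fw: bool)

definition valid :: "'n tr \<Rightarrow> bool" where
  "valid t \<longleftrightarrow> reachable (src t) \<and>
     (if fw t then fwd (src t) (lbl t) (tgt t) else fwd (tgt t) (lbl t) (src t))"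

fun inv_tr :: "'n tr \<Rightarrow> 'n tr" where
  "inv_tr (Tr P t Q b) = Tr Q t P (\<not> b)"

definition is_path :: "'n tr list \<Rightarrow> bool" where
  "is_path r \<longleftrightarrow> (\<forall>t\<in>set r. valid t) \<and>
     (\<forall>i. Suc i < length r \<longrightarrow> tgt (r ! i) = src (r ! Suc i))"

definition rooted :: "'n proc \<Rightarrow> bool" where
  "rooted P \<longleftrightarrow> \<not> (\<exists>t Q. fwd Q t P)"

definition rooted_path :: "'n tr list \<Rightarrow> bool" where
  "rooted_path r \<longleftrightarrow> r \<noteq> [] \<and> is_path r \<and> rooted (src (hd r))"

definition connected :: "'n tr \<Rightarrow> 'n tr \<Rightarrow> bool" where
  "connected t u \<longleftrightarrow> step\<^sup>*\<^sup>* (src t) (tgt u)"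

inductive conn :: "'n plab \<Rightarrow> 'n plab \<Rightarrow> bool" where
  A1: "conn (PAct a k) t"
| A2: "\<not> is_prefix t \<Longrightarrow> conn t (PAct a k)"
| P1: "conn t t' \<Longrightarrow> conn (PPar D t) (PPar D t')"
| P2: "conn (PPar D t) (PPar (dbar D) t')"
| C1: "conn t t' \<Longrightarrow> conn (PSum D t) (PSum D t')"
| C2: "conn (PSum D t) (PSum (dbar D) t')"
| S1: "conn t (comp D tL tR) \<Longrightarrow> conn (PPar D t) (PSyn tL tR)"
| S2: "conn (comp D tL tR) t \<Longrightarrow> conn (PSyn tL tR) (PPar D t)"
| S3: "conn tL tL' \<Longrightarrow> conn tR tR' \<Longrightarrow> conn (PSyn tL tR) (PSyn tL' tR')"

inductive dep :: "'n plab \<Rightarrow> 'n plab \<Rightarrow> bool" where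
  A1: "dep (PAct a k) t"
| A2: "\<not> is_prefix t \<Longrightarrow> dep t (PAct a k)"
| P1: "dep t t' \<Longrightarrow> dep (PPar D t) (PPar D t')"
| P2k: "pkey t = pkey t' \<Longrightarrow> dep (PPar D t) (PPar (dbar D) t')"
| C1: "dep t t' \<Longrightarrow> dep (PSum D t) (PSum D t')"
| C2: "dep (PSum D t) (PSum (dbar D) t')"
| S1: "dep t (comp D tL tR) \<Longrightarrow> dep (PPar D t) (PSyn tL tR)"
| S2: "dep (comp D tL tR) t \<Longrightarrow> dep (PSyn tL tR) (PPar D t)"
| S3L: "dep tL tL' \<Longrightarrow> conn tR tR' \<Longrightarrow> dep (PSyn tL tR) (PSyn tL' tR')"
| S3R: "dep tR tR' \<Longrightarrow> conn tL tL' \<Longrightarrow> dep (PSyn tL tR) (PSyn tL' tR')"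

inductive ind :: "'n plab \<Rightarrow> 'n plab \<Rightarrow> bool" where
  C1: "ind t t' \<Longrightarrow> ind (PSum D t) (PSum D t')"
| P1: "ind t t' \<Longrightarrow> ind (PPar D t) (PPar D t')"
| P2k: "pkey t \<noteq> pkey t' \<Longrightarrow> ind (PPar D t) (PPar (dbar D) t')"
| S1: "ind t (comp D tL tR) \<Longrightarrow> ind (PPar D t) (PSyn tL tR)"
| S2: "ind (comp D tL tR) t \<Longrightarrow> ind (PSyn tL tR) (PPar D t)"
| S3: "ind tL tL' \<Longrightarrow> ind tR tR' \<Longrightarrow> ind (PSyn tL tR) (PSyn tL' tR')"

definition tr_ind :: "'n tr \<Rightarrow> 'n tr \<Rightarrow> bool" where
  "tr_ind t u \<longleftrightarrow> connected t u \<and> ind (lbl t) (lbl u)"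

text \<open>The square generating event equivalence: t : P \<rightarrow> Q, u : P \<rightarrow> R,
 u' : Q \<rightarrow> S, t' : R \<rightarrow> S, with u' a copy of u and t' a copy of t, and t \<iota> u.\<close>
definition sq :: "'n tr \<Rightarrow> 'n tr \<Rightarrow> bool" where
  "sq t t' \<longleftrightarrow> (\<exists>u u'. valid t \<and> valid u \<and> valid u' \<and> valid t' \<and>
      src u = src t \<and> src u' = tgt t \<and> src t' = tgt u \<and> tgt u' = tgt t' \<and>
      lbl u' = lbl u \<and> fw u' = fw u \<and> lbl t' = lbl t \<and> fw t' = fw t \<and>
      tr_ind t u)"

inductive ev_eq :: "'n tr \<Rightarrow> 'n tr \<Rightarrow> bool" where
  refl: "valid t \<Longrightarrow> ev_eq t t"
| sq: "sq t t' \<Longrightarrow> ev_eq t t'"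
| sym: "ev_eq t t' \<Longrightarrow> ev_eq t' t"
| trans: "ev_eq t t' \<Longrightarrow> ev_eq t' t'' \<Longrightarrow> ev_eq t t''"

definition cls :: "'n tr \<Rightarrow> 'n tr set" where
  "cls t = {u. ev_eq t u}"

definition is_event :: "'n tr set \<Rightarrow> bool" where
  "is_event e \<longleftrightarrow> (\<exists>t. valid t \<and> e = cls t)"

definition fwd_event :: "'n tr set \<Rightarrow> bool" where
  "fwd_event e \<longleftrightarrow> (\<exists>t. valid t \<and> fw t \<and> e = cls t)"

definition ev_bar :: "'n tr set \<Rightarrow> 'n tr set" where
  "ev_bar e = (\<Union>t\<in>e. cls (inv_tr t))"

definition sharp :: "'n tr list \<Rightarrow> 'n tr set \<Rightarrow> int" where
  "sharp r e = sum_list (map (\<lambda>t. if t \<in> e then 1 else if t \<in> ev_bar e then -1 else 0) r)"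

definition ev_le :: "'n tr set \<Rightarrow> 'n tr set \<Rightarrow> bool" where
  "ev_le e e' \<longleftrightarrow> (\<forall>r. rooted_path r \<longrightarrow> sharp r e' > 0 \<longrightarrow> sharp r e > 0)"

definition ev_less :: "'n tr set \<Rightarrow> 'n tr set \<Rightarrow> bool" where
  "ev_less e e' \<longleftrightarrow> ev_le e e' \<and> e \<noteq> e'"

definition ev_composable :: "'n tr set \<Rightarrow> 'n tr set \<Rightarrow> bool" where
  "ev_composable e1 e2 \<longleftrightarrow> (\<exists>t1\<in>e1. \<exists>t2\<in>e2. tgt t1 = src t2)"

definition ev_dep :: "'n tr set \<Rightarrow> 'n tr set \<Rightarrow> bool" where
  "ev_dep e1 e2 \<longleftrightarrow> (\<exists>t1\<in>e1. \<exists>t2\<in>e2. dep (lbl t1) (lbl t2))"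

end

theory Submission
  imports Defs
begin

lemma keys_finite: "finite (keys P)"
  by (induction P) auto

lemma fwd_keys: "fwd P t Q \<Longrightarrow> pkey t \<notin> keys P \<and> keys Q = insert (pkey t) (keys P)"
  by (induction rule: fwd.induct) auto

fun wfl :: "'n plab \<Rightarrow> bool" where
  "wfl (PAct a k) = True"
| "wfl (PPar d t) = wfl t"
| "wfl (PSum d t) = wfl t"
| "wfl (PSyn a b) = (wfl a \<and> wfl b \<and> pkey a = pkey b)"

lemma fwd_wfl: "fwd P t Q \<Longrightarrow> wfl t"
  by (induction rule: fwd.induct) auto

lemma ind_key: "ind t t' \<Longrightarrow> wfl t \<Longrightarrow> wfl t' \<Longrightarrow> pkey t \<noteq> pkey t'"
proof (induction rule: ind.induct)
  case (S1 t D tL tR) then show ?case by (cases D) auto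
next
  case (S2 D tL tR t) then show ?case by (cases D) auto
qed auto

lemma ind_sym: "ind t t' \<Longrightarrow> ind t' t"
proof (induction rule: ind.induct)
  case (P2k t t' D)
  then show ?case using ind.P2k[of t' t "dbar D"] by (cases D) auto
qed (auto intro: ind.intros)

fun abv :: "'n proc \<Rightarrow> (key \<times> key) set" where
  "abv Nil0 = {}"
| "abv (Pre a X) = abv X"
| "abv (Res X l) = abv X"
| "abv (Sum X Y) = abv X \<union> abv Y"
| "abv (Par X Y) = abv X \<union> abv Y"
| "abv (Keyed a k X) = {k} \<times> keys X \<union> abv X"

lemma abv_keys: "abv P \<subseteq> keys P \<times> keys P"
  by (induction P) auto

fun unk :: "key set \<Rightarrow> 'n proc \<Rightarrow> 'n proc" where
  "unk K Nil0 = Nil0"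
| "unk K (Pre a X) = Pre a (unk K X)"
| "unk K (Res X l) = Res (unk K X) l"
| "unk K (Sum X Y) = Sum (unk K X) (unk K Y)"
| "unk K (Par X Y) = Par (unk K X) (unk K Y)"
| "unk K (Keyed a k X) = (if k \<in> K then Keyed a k (unk K X) else Pre a (unk K X))"

definition past :: "'n proc \<Rightarrow> key \<Rightarrow> key set" where
  "past P k = {x. (x,k) \<in> (abv P)\<^sup>*}"

definition kcut :: "'n proc \<Rightarrow> key \<Rightarrow> 'n proc" where
  "kcut P k = unk (past P k) P"

lemma keys_unk: "keys (unk K P) = keys P \<inter> K"
  by (induction P) auto

lemma abv_unk: "abv (unk K P) = abv P \<inter> (K \<times> K)"
  by (induction P) (auto simp: keys_unk)

lemma unk_unk: "unk A (unk B P) = unk (A \<inter> B) P"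
  by (induction P) auto

lemma unk_id: "keys P \<subseteq> K \<Longrightarrow> unk K P = P"
  by (induction P) auto

lemma fwd_abv: "fwd P t Q \<Longrightarrow> abv P \<subseteq> abv Q \<and> (\<forall>a b. (a,b) \<in> abv Q \<longrightarrow> (a,b) \<in> abv P \<or> b = pkey t)
   \<and> (\<forall>b. (pkey t, b) \<notin> abv Q)"
proof (induction rule: fwd.induct)
  case (pre X t X' k a)
  then show ?case using fwd_keys[OF pre.hyps(1)] abv_keys[of X] by auto
next
  case (syn X t1 X' Y t2 Y' l k)
  then show ?case using fwd_keys[OF syn.hyps(1)] fwd_keys[OF syn.hyps(2)] abv_keys[of X] abv_keys[of Y]
    by auto
qed (use fwd_keys abv_keys in fastforce)+

lemma fwd_unk: "fwd P t Q \<Longrightarrow> pkey t \<notin> K \<Longrightarrow> unk K Q = unk K P"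
  by (induction rule: fwd.induct) auto

lemma past_fwd: assumes "fwd P t Q" "k \<noteq> pkey t" shows "past Q k = past P k"
proof -
  note A = fwd_abv[OF assms(1)]
  have "(x,k) \<in> (abv P)\<^sup>*" if "(x,k) \<in> (abv Q)\<^sup>*" for x
    using that
  proof (induction rule: converse_rtrancl_induct)
    case base then show ?case by simp
  next
    case (step y z)
    have "(y,z) \<in> abv P"
    proof (rule ccontr)
      assume "(y,z) \<notin> abv P"
      then have "z = pkey t" using A step.hyps(1) by blast
      with step.hyps(2) assms(2) obtain w where "(z,w) \<in> abv Q"
        by (metis converse_rtranclE)
      with A \<open>z = pkey t\<close> show False by blast
    qed
    then show ?case using step.IH by (meson converse_rtrancl_into_rtrancl)
  qed
  moreover have "(x,k) \<in> (abv Q)\<^sup>*" if "(x,k) \<in> (abv P)\<^sup>*" for x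
    using that rtrancl_mono[of "abv P" "abv Q"] A by blast
  ultimately show ?thesis unfolding past_def by blast
qed

lemma past_sub: "past P k \<subseteq> insert k (keys P)"
proof
  fix x assume "x \<in> past P k"
  then have "(x,k) \<in> (abv P)\<^sup>*" by (simp add: past_def)
  then show "x \<in> insert k (keys P)"
    by (cases rule: converse_rtranclE) (use abv_keys in auto)
qed

lemma cut_fwd: assumes "fwd P t Q" "k \<in> keys P" shows "kcut Q k = kcut P k"
proof -
  have k: "k \<noteq> pkey t" using fwd_keys[OF assms(1)] assms(2) by auto
  have "pkey t \<notin> past P k" using past_sub[of P k] fwd_keys[OF assms(1)] k by auto
  then show ?thesis unfolding kcut_def past_fwd[OF assms(1) k] using fwd_unk[OF assms(1)] by simp
qed

inductive_cases fwdKeyed: "fwd (Keyed a k X) t S"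
inductive_cases fwdRes: "fwd (Res X l) t S"
inductive_cases fwdSum: "fwd (Sum X Y) t S"
inductive_cases fwdPar: "fwd (Par X Y) t S"
inductive_cases fwdPre: "fwd (Pre a X) t S"
inductive_cases fwdNil: "fwd Nil0 t S"

inductive_cases fwdKeyed2: "fwd S t (Keyed a k X)"
inductive_cases fwdRes2: "fwd S t (Res X l)"
inductive_cases fwdSum2: "fwd S t (Sum X Y)"
inductive_cases fwdPar2: "fwd S t (Par X Y)"
inductive_cases fwdPre2: "fwd S t (Pre a X)"

lemma fwd_tgt_key: "fwd P t Q \<Longrightarrow> pkey t \<in> keys Q"
  using fwd_keys by blast

lemma conn_S2L: "conn a t \<Longrightarrow> conn (PSyn a b) (PPar DL t)"
  using conn.S2[where D=DL] by simp
lemma conn_S2R: "conn b t \<Longrightarrow> conn (PSyn a b) (PPar DR t)"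
  using conn.S2[where D=DR] by simp

lemma conn_comp: "fwd P t1 Q \<Longrightarrow> fwd Q t2 S \<Longrightarrow> conn t1 t2"
proof (induction arbitrary: t2 S rule: fwd.induct)
  case (act X a k) then show ?case by (auto intro: conn.intros)
next
  case (pre X t X' k a) then show ?case by (auto elim: fwdKeyed)
next
  case (res X t X' l) then show ?case by (auto elim: fwdRes)
next
  case (parL X t X' Y)
  from parL.prems show ?case
    by (cases rule: fwdPar) (use parL conn.P2[of DL] in \<open>auto intro: conn.intros\<close>)
next
  case (parR X t X' Y)
  from parR.prems show ?case
    by (cases rule: fwdPar) (use parR conn.P2[of DR] in \<open>auto intro: conn.intros\<close>)
next
  case (syn X t1 X' Y t2 Y' l k)
  from syn.prems show ?case
    by (cases rule: fwdPar) (use syn in \<open>auto intro: conn_S2L conn_S2R conn.S3\<close>)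
next
  case (sumL X t X' Y)
  from sumL.prems show ?case
    by (cases rule: fwdSum) (use sumL fwd_tgt_key[OF sumL.hyps(1)] in \<open>auto intro: conn.intros\<close>)
next
  case (sumR X t X' Y)
  from sumR.prems show ?case
    by (cases rule: fwdSum) (use sumR fwd_tgt_key[OF sumR.hyps(1)] in \<open>auto intro: conn.intros\<close>)
qed

lemma dbar_neq[simp]: "dbar D \<noteq> D" "D \<noteq> dbar D" by (cases D; simp)+
lemma dbar_dbar[simp]: "dbar (dbar D) = D" by (cases D) auto

lemma dep_PP: "dep (PPar D t) (PPar D' t') \<longleftrightarrow> (D' = D \<and> dep t t') \<or> (D' = dbar D \<and> pkey t = pkey t')"
  by (auto elim: dep.cases intro: dep.intros simp: is_prefix_def)
lemma dep_SS: "dep (PSum D t) (PSum D' t') \<longleftrightarrow> (D' = D \<and> dep t t') \<or> D' = dbar D"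
  by (auto elim: dep.cases intro: dep.intros simp: is_prefix_def)
lemma dep_PY: "dep (PPar D t) (PSyn a b) \<longleftrightarrow> dep t (comp D a b)"
  by (auto elim: dep.cases intro: dep.intros simp: is_prefix_def)
lemma dep_YP: "dep (PSyn a b) (PPar D t) \<longleftrightarrow> dep (comp D a b) t"
  by (auto elim: dep.cases intro: dep.intros simp: is_prefix_def)
lemma dep_YY: "dep (PSyn a b) (PSyn c d) \<longleftrightarrow> (dep a c \<and> conn b d) \<or> (dep b d \<and> conn a c)"
  by (auto elim: dep.cases intro: dep.intros simp: is_prefix_def)
lemma dep_A: "dep (PAct a k) t"
  by (rule dep.A1)

lemma dep_PY_L: "dep (PPar DL t) (PSyn a b) \<longleftrightarrow> dep t a" by (simp add: dep_PY)
lemma dep_PY_R: "dep (PPar DR t) (PSyn a b) \<longleftrightarrow> dep t b" by (simp add: dep_PY)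
lemma dep_YP_L: "dep (PSyn a b) (PPar DL t) \<longleftrightarrow> dep a t" by (simp add: dep_YP)
lemma dep_YP_R: "dep (PSyn a b) (PPar DR t) \<longleftrightarrow> dep b t" by (simp add: dep_YP)

lemmas dep_simps = dep_PP dep_SS dep_PY_L dep_PY_R dep_YP_L dep_YP_R dep_YY dep_A

lemma dep_abv: "fwd P t1 Q \<Longrightarrow> fwd Q v S \<Longrightarrow> dep t1 v \<Longrightarrow> (pkey t1, pkey v) \<in> abv S"
proof (induction arbitrary: v S rule: fwd.induct)
  case (act X a k)
  from act.prems show ?case by (cases rule: fwdKeyed) (auto dest: fwd_tgt_key)
next
  case (pre X t X' k a) then show ?case by (auto elim: fwdKeyed)
next
  case (res X t X' l) then show ?case by (auto elim: fwdRes)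
next
  case (parL X t X' Y)
  from parL.prems show ?case
    by (cases rule: fwdPar) (use parL fwd_tgt_key[OF parL.hyps(1)] in \<open>fastforce simp: dep_simps\<close>)+
next
  case (parR X t X' Y)
  from parR.prems show ?case
    by (cases rule: fwdPar) (use parR fwd_tgt_key[OF parR.hyps(1)] in \<open>fastforce simp: dep_simps\<close>)+
next
  case (syn X t1 X' Y t2 Y' l k)
  from syn.prems show ?case
    by (cases rule: fwdPar) (use syn in \<open>fastforce simp: dep_simps\<close>)+
next
  case (sumL X t X' Y)
  from sumL.prems show ?case
    by (cases rule: fwdSum) (use sumL fwd_tgt_key[OF sumL.hyps(1)] in \<open>fastforce simp: dep_simps\<close>)+
next
  case (sumR X t X' Y)
  from sumR.prems show ?case
    by (cases rule: fwdSum) (use sumR fwd_tgt_key[OF sumR.hyps(1)] in \<open>fastforce simp: dep_simps\<close>)+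
qed

lemma swap: "fwd P t1 Q \<Longrightarrow> fwd Q v S \<Longrightarrow> \<not> dep t1 v \<Longrightarrow> \<exists>R. fwd P v R \<and> fwd R t1 S"
proof (induction arbitrary: v S rule: fwd.induct)
  case (act X a k) then show ?case by (simp add: dep_A)
next
  case (pre X t X' k a)
  obtain X'' where iK: "S = Keyed a k X''" "fwd X' v X''" "pkey v \<noteq> k"
    using pre.prems(1) by (auto elim: fwdKeyed)
  then obtain R where "fwd X v R" "fwd R t X''" using pre.IH pre.prems by blast
  then show ?case using iK pre.hyps by (auto intro: fwd.pre)
next
  case (res X t X' l)
  obtain X'' where iR: "S = Res X'' l" "fwd X' v X''" "lab v \<noteq> Vis l" "lab v \<noteq> Vis (vbar l)"
    using res.prems(1) by (auto elim: fwdRes)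
  then obtain R where "fwd X v R" "fwd R t X''" using res.IH res.prems by blast
  then show ?case using iR res.hyps by (auto intro: fwd.res)
next
  case (parL X t X' Y)
  note kt = fwd_keys[OF parL.hyps(1)]
  from parL.prems(1) show ?case
  proof (cases rule: fwdPar[consumes 1, case_names iL iR iY])
    case (iL u X'')
    then obtain R where "fwd X u R" "fwd R t X''" using parL.IH[of u X''] parL.prems by (auto simp: dep_simps)
    then show ?thesis using iL parL.hyps by (auto intro: fwd.parL)
  next
    case (iR u Y')
    have "fwd (Par X Y) v (Par X Y')" using iR kt by (auto intro: fwd.parR)
    moreover have "fwd (Par X Y') (PPar DL t) (Par X' Y')"
      using iR kt fwd_keys[OF iR(3)] parL.hyps by (auto intro!: fwd.parL)
    ultimately show ?thesis using iR by auto
  next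
    case (iY c X'' d Y' l)
    then obtain R where R: "fwd X c R" "fwd R t X''" using parL.IH parL.prems by (auto simp: dep_simps)
    have "fwd (Par X Y) v (Par R Y')" using iY R by (auto intro: fwd.syn)
    moreover have "fwd (Par R Y') (PPar DL t) (Par X'' Y')"
      using R iY kt fwd_keys[OF iY(3)] fwd_keys[OF iY(4)] parL.hyps by (auto intro!: fwd.parL)
    ultimately show ?thesis using iY by auto
  qed
next
  case (parR X t X' Y)
  note kt = fwd_keys[OF parR.hyps(1)]
  from parR.prems(1) show ?case
  proof (cases rule: fwdPar[consumes 1, case_names iL iR iY])
    case (iR u X'')
    then obtain R where "fwd X u R" "fwd R t X''" using parR.IH[of u X''] parR.prems by (auto simp: dep_simps)
    then show ?thesis using iR parR.hyps by (auto intro: fwd.parR)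
  next
    case (iL u Y')
    have "fwd (Par Y X) v (Par Y' X)" using iL kt by (auto intro: fwd.parL)
    moreover have "fwd (Par Y' X) (PPar DR t) (Par Y' X')"
      using iL kt fwd_keys[OF iL(3)] parR.hyps by (auto intro!: fwd.parR)
    ultimately show ?thesis using iL by auto
  next
    case (iY d Y' c X'' l)
    then obtain R where R: "fwd X c R" "fwd R t X''" using parR.IH parR.prems by (auto simp: dep_simps)
    have "fwd (Par Y X) v (Par Y' R)" using iY R by (auto intro: fwd.syn)
    moreover have "fwd (Par Y' R) (PPar DR t) (Par Y' X'')"
      using R iY kt fwd_keys[OF iY(3)] fwd_keys[OF iY(4)] parR.hyps by (auto intro!: fwd.parR)
    ultimately show ?thesis using iY by auto
  qed
next
  case (syn X a X' Y b Y' l k)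
  from syn.prems(1) show ?case
  proof (cases rule: fwdPar[consumes 1, case_names iL iR iY])
    case (iL u X'')
    then obtain R where R: "fwd X u R" "fwd R a X''" using syn.IH(1)[of u X''] syn.prems by (auto simp: dep_simps)
    have "fwd (Par X Y) v (Par R Y)" using iL R fwd_keys[OF syn.hyps(2)] by (auto intro!: fwd.parL)
    moreover have "fwd (Par R Y) (PSyn a b) (Par X'' Y')" using R syn.hyps by (auto intro: fwd.syn)
    ultimately show ?thesis using iL by auto
  next
    case (iR u Y'')
    then obtain R where R: "fwd Y u R" "fwd R b Y''" using syn.IH(2)[of u Y''] syn.prems by (auto simp: dep_simps)
    have "fwd (Par X Y) v (Par X R)" using iR R fwd_keys[OF syn.hyps(1)] by (auto intro!: fwd.parR)
    moreover have "fwd (Par X R) (PSyn a b) (Par X' Y'')" using R syn.hyps by (auto intro: fwd.syn)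
    ultimately show ?thesis using iR by auto
  next
    case (iY c X'' d Y'' l')
    have "conn a c" "conn b d" using conn_comp iY syn.hyps by blast+
    then have "\<not> dep a c" "\<not> dep b d" using syn.prems iY by (auto simp: dep_simps)
    then obtain R1 R2 where R: "fwd X c R1" "fwd R1 a X''" "fwd Y d R2" "fwd R2 b Y''"
      using syn.IH iY by blast
    have "fwd (Par X Y) v (Par R1 R2)" using R iY by (auto intro: fwd.syn)
    moreover have "fwd (Par R1 R2) (PSyn a b) (Par X'' Y'')" using R syn.hyps by (auto intro: fwd.syn)
    ultimately show ?thesis using iY by auto
  qed
next
  case (sumL X t X' Y)
  from sumL.prems(1) show ?case
  proof (cases rule: fwdSum[consumes 1, case_names iL iR])
    case (iL u X'')
    then obtain R where "fwd X u R" "fwd R t X''" using sumL.IH[of u X''] sumL.prems by (auto simp: dep_simps)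
    then show ?thesis using iL sumL.hyps by (auto intro: fwd.sumL)
  next
    case (iR u Y') then show ?thesis using fwd_tgt_key[OF sumL.hyps(1)] by auto
  qed
next
  case (sumR X t X' Y)
  from sumR.prems(1) show ?case
  proof (cases rule: fwdSum[consumes 1, case_names iL iR])
    case (iR u X'')
    then obtain R where "fwd X u R" "fwd R t X''" using sumR.IH[of u X''] sumR.prems by (auto simp: dep_simps)
    then show ?thesis using iR sumR.hyps by (auto intro: fwd.sumR)
  next
    case (iL u Y') then show ?thesis using fwd_tgt_key[OF sumR.hyps(1)] by auto
  qed
qed

lemma ind_S1L: "ind t a \<Longrightarrow> ind (PPar DL t) (PSyn a b)" using ind.S1[where D=DL] by simp
lemma ind_S1R: "ind t b \<Longrightarrow> ind (PPar DR t) (PSyn a b)" using ind.S1[where D=DR] by simp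
lemma ind_S2L: "ind a t \<Longrightarrow> ind (PSyn a b) (PPar DL t)" using ind.S2[where D=DL] by simp
lemma ind_S2R: "ind b t \<Longrightarrow> ind (PSyn a b) (PPar DR t)" using ind.S2[where D=DR] by simp
lemma ind_P2L: "pkey t \<noteq> pkey t' \<Longrightarrow> ind (PPar DL t) (PPar DR t')" using ind.P2k[where D=DL] by simp
lemma ind_P2R: "pkey t \<noteq> pkey t' \<Longrightarrow> ind (PPar DR t) (PPar DL t')" using ind.P2k[where D=DR] by simp
lemmas ind_intros = ind_S1L ind_S1R ind_S2L ind_S2R ind_P2L ind_P2R ind.C1 ind.P1 ind.S3

lemma bdet: "fwd S1 t1 T \<Longrightarrow> fwd S2 t2 T \<Longrightarrow> pkey t1 = pkey t2 \<Longrightarrow> S1 = S2 \<and> t1 = t2"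
proof (induction arbitrary: S2 t2 rule: fwd.induct)
  case (act X a k)
  from act.prems(1) show ?case
  proof (cases rule: fwdKeyed2[consumes 1, case_names A B])
    case A then show ?thesis by simp
  next
    case (B X0) then show ?thesis using fwd_tgt_key[OF B(2)] act.hyps by simp
  qed
next
  case (pre X t X' k a)
  from pre.prems(1) show ?case
  proof (cases rule: fwdKeyed2[consumes 1, case_names A B])
    case A then show ?thesis using fwd_tgt_key[OF pre.hyps(1)] by simp
  next
    case (B X0) then show ?thesis using pre.IH[of X0 t2] pre.prems by simp
  qed
next
  case (res X t X' l)
  from res.prems(1) show ?case
    by (cases rule: fwdRes2) (use res.IH res.prems in auto)
next
  case (parL X t X' Y)
  from parL.prems(1) show ?case
  proof (cases rule: fwdPar2[consumes 1, case_names A B C])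
    case (A X0 u) then show ?thesis using parL.IH[of X0 u] parL.prems by simp
  next
    case (B Y0 u) then show ?thesis using parL.prems fwd_tgt_key[OF B(3)] parL.hyps by simp
  next
    case (C X0 a Y0 b l) then show ?thesis using parL.prems fwd_tgt_key[OF C(4)] parL.hyps by simp
  qed
next
  case (parR X t X' Y)
  from parR.prems(1) show ?case
  proof (cases rule: fwdPar2[consumes 1, case_names A B C])
    case (B X0 u) then show ?thesis using parR.IH[of X0 u] parR.prems by simp
  next
    case (A Y0 u) then show ?thesis using parR.prems fwd_tgt_key[OF A(3)] parR.hyps by simp
  next
    case (C Y0 a X0 b l) then show ?thesis using parR.prems fwd_tgt_key[OF C(3)] parR.hyps by simp
  qed
next
  case (syn X a X' Y b Y' l k)
  from syn.prems(1) show ?case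
  proof (cases rule: fwdPar2[consumes 1, case_names A B C])
    case (A X0 u) then show ?thesis using syn.prems fwd_tgt_key[OF syn.hyps(2)] syn.hyps by simp
  next
    case (B Y0 u) then show ?thesis using syn.prems fwd_tgt_key[OF syn.hyps(1)] syn.hyps by simp
  next
    case (C X0 c Y0 d l')
    then show ?thesis using syn.IH(1)[of X0 c] syn.IH(2)[of Y0 d] syn.prems syn.hyps by simp
  qed
next
  case (sumL X t X' Y)
  from sumL.prems(1) show ?case
  proof (cases rule: fwdSum2[consumes 1, case_names A B])
    case (A X0 u) then show ?thesis using sumL.IH[of X0 u] sumL.prems by simp
  next
    case (B Y0 u) then show ?thesis using fwd_tgt_key[OF sumL.hyps(1)] by simp
  qed
next
  case (sumR X t X' Y)
  from sumR.prems(1) show ?case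
  proof (cases rule: fwdSum2[consumes 1, case_names A B])
    case (B X0 u) then show ?thesis using sumR.IH[of X0 u] sumR.prems by simp
  next
    case (A Y0 u) then show ?thesis using fwd_tgt_key[OF sumR.hyps(1)] by simp
  qed
qed

lemma bdia: "fwd S1 t1 T \<Longrightarrow> fwd S2 t2 T \<Longrightarrow> pkey t1 \<noteq> pkey t2 \<Longrightarrow>
   ind t1 t2 \<and> (\<exists>R. fwd R t2 S1 \<and> fwd R t1 S2)"
proof (induction arbitrary: S2 t2 rule: fwd.induct)
  case (act X a k)
  from act.prems(1) show ?case
  proof (cases rule: fwdKeyed2[consumes 1, case_names A B])
    case A then show ?thesis using act.prems by simp
  next
    case (B X0) then show ?thesis using fwd_tgt_key[OF B(2)] act.hyps by simp
  qed
next
  case (pre X t X' k a)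
  from pre.prems(1) show ?case
  proof (cases rule: fwdKeyed2[consumes 1, case_names A B])
    case A then show ?thesis using fwd_tgt_key[OF pre.hyps(1)] by simp
  next
    case (B X0)
    then obtain R0 where "ind t t2" "fwd R0 t2 X" "fwd R0 t X0" using pre.IH[of X0 t2] pre.prems by blast
    then show ?thesis using B pre.hyps by (auto intro: fwd.pre)
  qed
next
  case (res X t X' l)
  from res.prems(1) show ?case
  proof (cases rule: fwdRes2[consumes 1, case_names A])
    case (A X0)
    then obtain R0 where "ind t t2" "fwd R0 t2 X" "fwd R0 t X0" using res.IH[of X0 t2] res.prems by blast
    then show ?thesis using A res.hyps by (auto intro: fwd.res)
  qed
next
  case (parL X t X' Y)
  note kt = fwd_keys[OF parL.hyps(1)]
  from parL.prems(1) show ?case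
  proof (cases rule: fwdPar2[consumes 1, case_names A B C])
    case (A X0 u)
    then obtain R0 where "ind t u" "fwd R0 u X" "fwd R0 t X0" using parL.IH[of X0 u] parL.prems by auto
    then show ?thesis using A parL.hyps by (auto intro: fwd.parL ind.P1)
  next
    case (B Y0 u)
    have "fwd (Par X Y0) (PPar DR u) (Par X Y)" using B kt by (auto intro: fwd.parR)
    moreover have "fwd (Par X Y0) (PPar DL t) (Par X' Y0)"
      using B parL.hyps fwd_keys[OF B(3)] by (auto intro: fwd.parL)
    moreover have "ind (PPar DL t) (PPar DR u)" using parL.prems B by (auto intro: ind_P2L)
    ultimately show ?thesis using B by auto
  next
    case (C X0 a Y0 b l)
    then obtain R0 where R0: "ind t a" "fwd R0 a X" "fwd R0 t X0" using parL.IH[of X0 a] parL.prems by auto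
    have "fwd (Par R0 Y0) (PSyn a b) (Par X Y)" using R0 C by (auto intro: fwd.syn)
    moreover have "fwd (Par R0 Y0) (PPar DL t) (Par X0 Y0)"
      using R0 C parL.hyps fwd_keys[OF C(4)] by (auto intro: fwd.parL)
    moreover have "ind (PPar DL t) (PSyn a b)" using R0 by (auto intro: ind_S1L)
    ultimately show ?thesis using C by auto
  qed
next
  case (parR X t X' Y)
  note kt = fwd_keys[OF parR.hyps(1)]
  from parR.prems(1) show ?case
  proof (cases rule: fwdPar2[consumes 1, case_names A B C])
    case (B X0 u)
    then obtain R0 where "ind t u" "fwd R0 u X" "fwd R0 t X0" using parR.IH[of X0 u] parR.prems by auto
    then show ?thesis using B parR.hyps by (auto intro: fwd.parR ind.P1)
  next
    case (A Y0 u)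
    have "fwd (Par Y0 X) (PPar DL u) (Par Y X)" using A kt by (auto intro: fwd.parL)
    moreover have "fwd (Par Y0 X) (PPar DR t) (Par Y0 X')"
      using A parR.hyps fwd_keys[OF A(3)] by (auto intro: fwd.parR)
    moreover have "ind (PPar DR t) (PPar DL u)" using parR.prems A by (auto intro: ind_P2R)
    ultimately show ?thesis using A by auto
  next
    case (C Y0 b X0 a l)
    then obtain R0 where R0: "ind t a" "fwd R0 a X" "fwd R0 t X0" using parR.IH[of X0 a] parR.prems by auto
    have "fwd (Par Y0 R0) (PSyn b a) (Par Y X)" using R0 C by (auto intro: fwd.syn)
    moreover have "fwd (Par Y0 R0) (PPar DR t) (Par Y0 X0)"
      using R0 C parR.hyps fwd_keys[OF C(3)] by (auto intro: fwd.parR)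
    moreover have "ind (PPar DR t) (PSyn b a)" using R0 by (auto intro: ind_S1R)
    ultimately show ?thesis using C by auto
  qed
next
  case (syn X a X' Y b Y' l k)
  from syn.prems(1) show ?case
  proof (cases rule: fwdPar2[consumes 1, case_names A B C])
    case (A X0 u)
    then obtain R0 where R0: "ind a u" "fwd R0 u X" "fwd R0 a X0" using syn.IH(1)[of X0 u] syn.prems by auto
    have "fwd (Par R0 Y) (PPar DL u) (Par X Y)" using R0 A fwd_keys[OF syn.hyps(2)] by (auto intro: fwd.parL)
    moreover have "fwd (Par R0 Y) (PSyn a b) (Par X0 Y')" using R0 A syn.hyps by (auto intro: fwd.syn)
    moreover have "ind (PSyn a b) (PPar DL u)" using R0 by (auto intro: ind_S2L)
    ultimately show ?thesis using A by auto
  next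
    case (B Y0 u)
    then obtain R0 where R0: "ind b u" "fwd R0 u Y" "fwd R0 b Y0" using syn.IH(2)[of Y0 u] syn.prems syn.hyps by auto
    have "fwd (Par X R0) (PPar DR u) (Par X Y)" using R0 B fwd_keys[OF syn.hyps(1)] by (auto intro: fwd.parR)
    moreover have "fwd (Par X R0) (PSyn a b) (Par X' Y0)" using R0 B syn.hyps by (auto intro: fwd.syn)
    moreover have "ind (PSyn a b) (PPar DR u)" using R0 by (auto intro: ind_S2R)
    ultimately show ?thesis using B by auto
  next
    case (C X0 c Y0 d l')
    then obtain R1 R2 where R: "ind a c" "fwd R1 c X" "fwd R1 a X0" "ind b d" "fwd R2 d Y" "fwd R2 b Y0"
      using syn.IH(1)[of X0 c] syn.IH(2)[of Y0 d] syn.prems syn.hyps by auto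
    have "fwd (Par R1 R2) (PSyn c d) (Par X Y)" using R C by (auto intro: fwd.syn)
    moreover have "fwd (Par R1 R2) (PSyn a b) (Par X0 Y0)" using R syn.hyps by (auto intro: fwd.syn)
    moreover have "ind (PSyn a b) (PSyn c d)" using R by (auto intro: ind.S3)
    ultimately show ?thesis using C by auto
  qed
next
  case (sumL X t X' Y)
  from sumL.prems(1) show ?case
  proof (cases rule: fwdSum2[consumes 1, case_names A B])
    case (A X0 u)
    then obtain R0 where "ind t u" "fwd R0 u X" "fwd R0 t X0" using sumL.IH[of X0 u] sumL.prems by auto
    then show ?thesis using A sumL.hyps by (auto intro: fwd.sumL ind.C1)
  next
    case (B Y0 u) then show ?thesis using fwd_tgt_key[OF sumL.hyps(1)] by simp
  qed
next
  case (sumR X t X' Y)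
  from sumR.prems(1) show ?case
  proof (cases rule: fwdSum2[consumes 1, case_names A B])
    case (B X0 u)
    then obtain R0 where "ind t u" "fwd R0 u X" "fwd R0 t X0" using sumR.IH[of X0 u] sumR.prems by auto
    then show ?thesis using B sumR.hyps by (auto intro: fwd.sumR ind.C1)
  next
    case (A Y0 u) then show ?thesis using fwd_tgt_key[OF sumR.hyps(1)] by simp
  qed
qed

definition fs :: "'n proc \<Rightarrow> 'n proc \<Rightarrow> bool" where
  "fs A B \<longleftrightarrow> (\<exists>t. fwd A t B)"

definition fr :: "'n proc \<Rightarrow> bool" where
  "fr P \<longleftrightarrow> (\<exists>Z. standard Z \<and> fs\<^sup>*\<^sup>* Z P)"

lemma fs_steps: "fs\<^sup>*\<^sup>* A B \<Longrightarrow> step\<^sup>*\<^sup>* A B"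
  by (induction rule: rtranclp_induct) (auto simp: fs_def step_def intro: rtranclp.rtrancl_into_rtrancl)

lemma fr_reach: "fr P \<Longrightarrow> reachable P"
  unfolding fr_def reachable_def using fs_steps by blast

lemma reach_step: "reachable P \<Longrightarrow> step P Q \<Longrightarrow> reachable Q"
  unfolding reachable_def by (meson rtranclp.rtrancl_into_rtrancl)

lemma reach_fwd: "reachable P \<Longrightarrow> fwd P t Q \<Longrightarrow> reachable Q"
  using reach_step step_def by metis

lemma reach_bwd: "reachable P \<Longrightarrow> fwd Q t P \<Longrightarrow> reachable Q"
  using reach_step step_def by metis

lemma fr_fwd: assumes "fr P" "fwd P t Q" shows "fr Q"
proof -
  obtain Z where "standard Z" "fs\<^sup>*\<^sup>* Z P" using assms(1) fr_def by blast
  moreover have "fs P Q" using assms(2) fs_def by blast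
  ultimately show ?thesis unfolding fr_def by (meson rtranclp.rtrancl_into_rtrancl)
qed

lemma back_fr: "fs\<^sup>*\<^sup>* Z P \<Longrightarrow> standard Z \<Longrightarrow> fwd Q t P \<Longrightarrow> fr Q"
proof (induction arbitrary: Q t rule: rtranclp_induct)
  case base
  then show ?case using fwd_tgt_key[OF base(2)] by (simp add: standard_def)
next
  case (step P' P)
  then obtain z where z: "fwd P' z P" by (auto simp: fs_def)
  show ?case
  proof (cases "pkey z = pkey t")
    case True
    then have "Q = P'" using bdet[OF step.prems(2) z] by simp
    then show ?thesis using step.hyps(1) step.prems(1) unfolding fr_def by blast
  next
    case False
    then obtain R where "fwd R t P'" "fwd R z Q" using bdia[OF z step.prems(2)] by blast
    then have "fr R" using step.IH step.prems(1) by blast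
    then show ?thesis using \<open>fwd R z Q\<close> fr_fwd by blast
  qed
qed

lemma reach_fr: "reachable P \<Longrightarrow> fr P"
proof -
  assume "reachable P"
  then obtain S where S: "standard S" "step\<^sup>*\<^sup>* S P" by (auto simp: reachable_def)
  from S(2) show ?thesis
  proof (induction rule: rtranclp_induct)
    case base then show ?case using S(1) by (auto simp: fr_def)
  next
    case (step Q R)
    then obtain t where "fwd Q t R \<or> fwd R t Q" by (auto simp: step_def)
    then show ?case
    proof
      assume "fwd Q t R" then show ?thesis using step.IH fr_fwd by blast
    next
      assume "fwd R t Q" then show ?thesis using step.IH back_fr unfolding fr_def by blast
    qed
  qed
qed

lemma exist_undo:
  assumes "fs\<^sup>*\<^sup>* Z T" "standard Z" "U \<subseteq> keys T" "U \<noteq> {}"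
    "\<And>a b. (a,b) \<in> abv T \<Longrightarrow> a \<in> U \<Longrightarrow> b \<in> U"
  shows "\<exists>R t. fwd R t T \<and> pkey t \<in> U"
  using assms
proof (induction arbitrary: U rule: rtranclp_induct)
  case base then show ?case by (auto simp: standard_def)
next
  case (step T' T)
  then obtain z where z: "fwd T' z T" by (auto simp: fs_def)
  show ?case
  proof (cases "pkey z \<in> U")
    case True then show ?thesis using z by blast
  next
    case False
    have "U \<subseteq> keys T'" using step.prems fwd_keys[OF z] False by auto
    moreover have "\<And>a b. (a,b) \<in> abv T' \<Longrightarrow> a \<in> U \<Longrightarrow> b \<in> U" using step.prems fwd_abv[OF z] by blast
    ultimately obtain R w where Rw: "fwd R w T'" "pkey w \<in> U" using step.IH[of U] step.prems(1,3) by auto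
    have "\<not> dep w z"
    proof
      assume "dep w z"
      then have "(pkey w, pkey z) \<in> abv T" using dep_abv[OF Rw(1) z] by simp
      then show False using step.prems(4) Rw(2) False by blast
    qed
    then obtain R' where "fwd R z R'" "fwd R' w T" using swap[OF Rw(1) z] by blast
    then show ?thesis using Rw(2) by blast
  qed
qed

lemma valid_fw: "valid (Tr P t Q True) \<longleftrightarrow> reachable P \<and> fwd P t Q"
  by (simp add: valid_def)
lemma valid_bw: "valid (Tr P t Q False) \<longleftrightarrow> reachable P \<and> fwd Q t P"
  by (simp add: valid_def)

lemma inv_simps[simp]: "src (inv_tr x) = tgt x" "tgt (inv_tr x) = src x" "lbl (inv_tr x) = lbl x"
  "fw (inv_tr x) = (\<not> fw x)" "inv_tr (inv_tr x) = x"
  by (cases x; simp)+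

lemma valid_fwd: "valid x \<Longrightarrow> fw x \<Longrightarrow> fwd (src x) (lbl x) (tgt x)"
  by (simp add: valid_def)
lemma valid_bwd: "valid x \<Longrightarrow> \<not> fw x \<Longrightarrow> fwd (tgt x) (lbl x) (src x)"
  by (simp add: valid_def)

lemma valid_inv: "valid x \<Longrightarrow> valid (inv_tr x)"
  unfolding valid_def
  by (cases x) (auto intro: reach_fwd reach_bwd)

lemma valid_wfl: "valid x \<Longrightarrow> wfl (lbl x)"
  unfolding valid_def by (auto split: if_splits intro: fwd_wfl)

lemma ev_eq_props: "ev_eq x y \<Longrightarrow> valid x \<and> valid y \<and> lbl x = lbl y \<and> fw x = fw y"
  by (induction rule: ev_eq.induct) (auto simp: sq_def)

lemma fwd_steps: "fwd A t B \<Longrightarrow> step\<^sup>*\<^sup>* A B \<and> step\<^sup>*\<^sup>* B A"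
  by (auto simp: step_def intro!: r_into_rtranclp)

lemma valid_steps: "valid x \<Longrightarrow> step\<^sup>*\<^sup>* (src x) (tgt x)"
  unfolding valid_def using fwd_steps by (auto split: if_splits)

lemma sq_inv: "sq t t' \<Longrightarrow> sq (inv_tr t) (inv_tr t')"
proof -
  assume "sq t t'"
  then obtain u u' where A: "valid t" "valid u" "valid u'" "valid t'"
      "src u = src t" "src u' = tgt t" "src t' = tgt u" "tgt u' = tgt t'"
      "lbl u' = lbl u" "fw u' = fw u" "lbl t' = lbl t" "fw t' = fw t" "tr_ind t u"
    unfolding sq_def by blast
  have "tr_ind (inv_tr t) u'"
    using A valid_steps[OF A(3)] unfolding tr_ind_def connected_def by simp
  then show ?thesis unfolding sq_def using A
    by (intro exI[of _ u'] exI[of _ u]) (auto intro: valid_inv)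
qed

lemma ev_eq_inv: "ev_eq x y \<Longrightarrow> ev_eq (inv_tr x) (inv_tr y)"
proof (induction rule: ev_eq.induct)
  case (refl t) then show ?case by (auto intro: ev_eq.refl valid_inv)
next
  case (sq t t') then show ?case by (auto intro: ev_eq.sq sq_inv)
qed (auto intro: ev_eq.sym ev_eq.trans)

lemma ev_eq_cut: "ev_eq x y \<Longrightarrow> fw x \<Longrightarrow> kcut (tgt x) (pkey (lbl x)) = kcut (tgt y) (pkey (lbl x))"
proof (induction rule: ev_eq.induct)
  case (refl t) then show ?case by simp
next
  case (sq t t')
  then obtain u u' where A: "valid t" "valid u" "valid u'" "valid t'"
      "src u = src t" "src u' = tgt t" "src t' = tgt u" "tgt u' = tgt t'"
      "lbl u' = lbl u" "fw u' = fw u" "lbl t' = lbl t" "fw t' = fw t" "tr_ind t u"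
    unfolding sq_def by blast
  have ft: "fwd (src t) (lbl t) (tgt t)" using A(1) sq.prems valid_fwd by blast
  have "pkey (lbl t) \<noteq> pkey (lbl u)"
    using A(13) valid_wfl[OF A(1)] valid_wfl[OF A(2)] ind_key unfolding tr_ind_def by blast
  moreover have kt: "pkey (lbl t) \<in> keys (tgt t)" using fwd_tgt_key[OF ft] .
  show ?case
  proof (cases "fw u'")
    case True
    then have "fwd (tgt t) (lbl u) (tgt t')" using A valid_fwd[OF A(3)] by simp
    then show ?thesis using cut_fwd kt by metis
  next
    case False
    then have f: "fwd (tgt t') (lbl u) (tgt t)" using A valid_bwd[OF A(3)] by simp
    have "pkey (lbl t) \<in> keys (tgt t')" using fwd_keys[OF f] kt \<open>pkey (lbl t) \<noteq> pkey (lbl u)\<close> by auto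
    then show ?thesis using cut_fwd[OF f] by metis
  qed
next
  case (sym t t')
  then show ?case using ev_eq_props[OF sym.hyps] by simp
next
  case (trans t t' t'')
  then show ?case using ev_eq_props[OF trans.hyps(1)] by simp
qed

lemma reduce: "card (keys T) = n \<Longrightarrow> reachable S \<Longrightarrow> fwd S th T \<Longrightarrow>
  \<exists>S' M. ev_eq (Tr S th T True) (Tr S' th M True) \<and> fwd S' th M \<and>
     kcut M (pkey th) = kcut T (pkey th) \<and> keys M \<subseteq> past M (pkey th)"
proof (induction n arbitrary: S T rule: less_induct)
  case (less n)
  define k where "k = pkey th"
  have vx: "valid (Tr S th T True)" using less.prems by (simp add: valid_fw)
  show ?case
  proof (cases "keys T \<subseteq> past T k")
    case True
    then show ?thesis using less.prems vx k_def by (auto intro: ev_eq.refl)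
  next
    case False
    define U where "U = keys T - past T k"
    have kT: "k \<in> keys T" using fwd_tgt_key[OF less.prems(3)] k_def by simp
    have rT: "reachable T" using less.prems reach_fwd by blast
    then obtain Z where Z: "standard Z" "fs\<^sup>*\<^sup>* Z T" using reach_fr fr_def by blast
    have up: "b \<in> U" if "(a,b) \<in> abv T" "a \<in> U" for a b
    proof -
      have "b \<in> keys T" using that abv_keys by blast
      moreover have "b \<notin> past T k"
      proof
        assume "b \<in> past T k"
        then have "(a,k) \<in> (abv T)\<^sup>*" using that(1) unfolding past_def
          by (simp add: converse_rtrancl_into_rtrancl)
        then show False using that(2) unfolding U_def past_def by simp
      qed
      ultimately show ?thesis unfolding U_def by simp
    qed
    obtain R' w where Rw: "fwd R' w T" "pkey w \<in> U"
      using exist_undo[OF Z(2) Z(1), of U] up False unfolding U_def by blast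
    have "k \<in> past T k" by (simp add: past_def)
    then have kw: "pkey th \<noteq> pkey w" using Rw(2) k_def U_def by auto
    obtain R where R: "ind th w" "fwd R w S" "fwd R th R'" using bdia[OF less.prems(3) Rw(1) kw] by blast
    have rR: "reachable R" using less.prems(2) R(2) reach_bwd by blast
    have "sq (Tr S th T True) (Tr R th R' True)"
      unfolding sq_def
      apply (rule exI[of _ "Tr S w R False"], rule exI[of _ "Tr T w R' False"])
      using vx rR rT R Rw(1) less.prems(2) fwd_steps[OF R(2)]
      by (auto simp: valid_def tr_ind_def connected_def)
    then have e1: "ev_eq (Tr S th T True) (Tr R th R' True)" by (rule ev_eq.sq)
    have kR': "k \<in> keys R'" using fwd_tgt_key[OF R(3)] k_def by simp
    have c1: "kcut T k = kcut R' k" using cut_fwd[OF Rw(1) kR'] .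
    have "keys T = insert (pkey w) (keys R')" "pkey w \<notin> keys R'" using fwd_keys[OF Rw(1)] by auto
    then have "card (keys R') < n" using less.prems(1) keys_finite[of R'] by simp
    then obtain S' M where "ev_eq (Tr R th R' True) (Tr S' th M True)" "fwd S' th M"
      "kcut M (pkey th) = kcut R' (pkey th)" "keys M \<subseteq> past M (pkey th)"
      using less.IH[OF \<open>card (keys R') < n\<close> HOL.refl rR R(3)] by blast
    then show ?thesis using e1 c1 k_def by (metis ev_eq.trans)
  qed
qed

lemma hard_dir:
  assumes "valid x" "fw x" "valid t" "fw t" "pkey (lbl x) = pkey (lbl t)"
    "kcut (tgt x) (pkey (lbl t)) = kcut (tgt t) (pkey (lbl t))"
  shows "ev_eq t x"
proof -
  obtain S1 th1 T1 where x: "x = Tr S1 th1 T1 True" using assms(2) by (cases x) auto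
  obtain S2 th2 T2 where t: "t = Tr S2 th2 T2 True" using assms(4) by (cases t) auto
  have v1: "reachable S1" "fwd S1 th1 T1" using assms(1) x by (auto simp: valid_fw)
  have v2: "reachable S2" "fwd S2 th2 T2" using assms(3) t by (auto simp: valid_fw)
  define k where "k = pkey th2"
  have k1: "pkey th1 = k" using assms(5) x t k_def by simp
  obtain S1' M1 where A: "ev_eq x (Tr S1' th1 M1 True)" "fwd S1' th1 M1"
     "kcut M1 k = kcut T1 k" "keys M1 \<subseteq> past M1 k"
    using reduce[OF HOL.refl v1] x k1 by auto
  obtain S2' M2 where B: "ev_eq t (Tr S2' th2 M2 True)" "fwd S2' th2 M2"
     "kcut M2 k = kcut T2 k" "keys M2 \<subseteq> past M2 k"
    using reduce[OF HOL.refl v2] t k_def by auto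
  have "M1 = kcut M1 k" using A(4) unk_id unfolding kcut_def by metis
  also have "\<dots> = kcut M2 k" using A(3) B(3) assms(6) x t k_def by simp
  also have "\<dots> = M2" using B(4) unk_id unfolding kcut_def by metis
  finally have "M1 = M2" .
  then have "S1' = S2' \<and> th1 = th2" using bdet[OF A(2)] B(2) k1 k_def by simp
  then show ?thesis using A(1) B(1) \<open>M1 = M2\<close> by (metis ev_eq.sym ev_eq.trans)
qed

definition H :: "'n tr \<Rightarrow> 'n proc \<Rightarrow> bool" where
  "H t P \<longleftrightarrow> pkey (lbl t) \<in> keys P \<and> kcut P (pkey (lbl t)) = kcut (tgt t) (pkey (lbl t))"

lemma ta_fwd:
  assumes "valid t" "fw t" "valid y" "fw y"
  shows "(of_bool (ev_eq t y) :: int) = of_bool (H t (tgt y)) - of_bool (H t (src y))"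
proof -
  have fy: "fwd (src y) (lbl y) (tgt y)" using assms valid_fwd by blast
  note ky = fwd_keys[OF fy]
  show ?thesis
  proof (cases "pkey (lbl y) = pkey (lbl t)")
    case True
    have "\<not> H t (src y)" using True ky by (auto simp: H_def)
    moreover have "ev_eq t y \<longleftrightarrow> H t (tgt y)"
    proof
      assume "ev_eq t y"
      then show "H t (tgt y)" using ev_eq_cut[of t y] assms True ky by (auto simp: H_def)
    next
      assume "H t (tgt y)"
      then show "ev_eq t y" using hard_dir[OF assms(3,4,1,2) True] by (auto simp: H_def)
    qed
    ultimately show ?thesis by simp
  next
    case False
    have "\<not> ev_eq t y" using False ev_eq_props by metis
    moreover have "H t (tgt y) = H t (src y)"
      using False ky cut_fwd[OF fy, of "pkey (lbl t)"] by (auto simp: H_def)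
    ultimately show ?thesis by simp
  qed
qed

lemma in_cls: "x \<in> cls t \<longleftrightarrow> ev_eq t x" by (simp add: cls_def)

lemma in_ev_bar: "valid x \<Longrightarrow> x \<in> ev_bar (cls t) \<longleftrightarrow> ev_eq t (inv_tr x)"
proof
  assume "x \<in> ev_bar (cls t)"
  then obtain y where "ev_eq t y" "ev_eq (inv_tr y) x" by (auto simp: ev_bar_def cls_def)
  then show "ev_eq t (inv_tr x)" using ev_eq_inv[of "inv_tr y" x] by (auto intro: ev_eq.trans)
next
  assume "valid x" "ev_eq t (inv_tr x)"
  then show "x \<in> ev_bar (cls t)" unfolding ev_bar_def cls_def
    using ev_eq.refl[of x] by (intro UN_I[of "inv_tr x"]) auto
qed

lemma ta:
  assumes "valid t" "fw t" "valid x"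
  shows "(if x \<in> cls t then 1 else if x \<in> ev_bar (cls t) then -1 else 0) =
     (of_bool (H t (tgt x)) - of_bool (H t (src x)) :: int)"
proof (cases "fw x")
  case True
  have "\<not> ev_eq t (inv_tr x)" using ev_eq_props[of t "inv_tr x"] True assms by auto
  then have "(if x \<in> cls t then 1 else if x \<in> ev_bar (cls t) then -1 else 0) = (of_bool (ev_eq t x) :: int)"
    using in_ev_bar[OF assms(3)] by (simp add: in_cls)
  then show ?thesis using ta_fwd[OF assms True] by simp
next
  case False
  have "\<not> ev_eq t x" using ev_eq_props[of t x] False assms by auto
  moreover have "valid (inv_tr x)" "fw (inv_tr x)" using valid_inv[OF assms(3)] False by auto
  moreover have "(if x \<in> cls t then 1 else if x \<in> ev_bar (cls t) then -1 else 0) = - (of_bool (ev_eq t (inv_tr x)) :: int)"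
    using in_ev_bar[OF assms(3)] \<open>\<not> ev_eq t x\<close> by (simp add: in_cls)
  ultimately show ?thesis using ta_fwd[OF assms(1,2), of "inv_tr x"] by simp
qed

lemma is_path_Cons: "is_path (x # r) \<longleftrightarrow> valid x \<and> is_path r \<and> (r \<noteq> [] \<longrightarrow> tgt x = src (hd r))"
proof
  assume A: "is_path (x # r)"
  then have "valid x" "\<forall>t\<in>set r. valid t" by (auto simp: is_path_def)
  moreover have "\<forall>i. Suc i < length r \<longrightarrow> tgt (r ! i) = src (r ! Suc i)"
    using A unfolding is_path_def by (metis Suc_less_eq length_Cons nth_Cons_Suc)
  moreover have "r \<noteq> [] \<longrightarrow> tgt x = src (hd r)"
    using A unfolding is_path_def by (metis hd_conv_nth length_Cons length_greater_0_conv nth_Cons_0 nth_Cons_Suc zero_less_Suc Suc_less_eq)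
  ultimately show "valid x \<and> is_path r \<and> (r \<noteq> [] \<longrightarrow> tgt x = src (hd r))" by (simp add: is_path_def)
next
  assume A: "valid x \<and> is_path r \<and> (r \<noteq> [] \<longrightarrow> tgt x = src (hd r))"
  show "is_path (x # r)" unfolding is_path_def
  proof (intro conjI allI impI)
    show "\<forall>t\<in>set (x # r). valid t" using A by (auto simp: is_path_def)
  next
    fix i assume i: "Suc i < length (x # r)"
    show "tgt ((x # r) ! i) = src ((x # r) ! Suc i)"
    proof (cases i)
      case 0 then show ?thesis using A i by (auto simp: hd_conv_nth)
    next
      case (Suc j) then show ?thesis using A i by (auto simp: is_path_def)
    qed
  qed
qed

lemma sharp_tele:
  assumes "valid t" "fw t"
  shows "is_path r \<Longrightarrow> r \<noteq> [] \<Longrightarrow> sharp r (cls t) = of_bool (H t (tgt (last r))) - of_bool (H t (src (hd r)))"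
proof (induction r)
  case Nil then show ?case by simp
next
  case (Cons x r)
  have vx: "valid x" using Cons.prems is_path_Cons by blast
  show ?case
  proof (cases "r = []")
    case True
    then show ?thesis using ta[OF assms vx] by (simp add: sharp_def)
  next
    case False
    then have "is_path r" "tgt x = src (hd r)" using Cons.prems is_path_Cons by blast+
    then have "sharp r (cls t) = of_bool (H t (tgt (last r))) - of_bool (H t (tgt x))"
      using Cons.IH False by simp
    moreover have "sharp (x # r) (cls t) = (if x \<in> cls t then 1 else if x \<in> ev_bar (cls t) then -1 else 0) + sharp r (cls t)"
      by (simp add: sharp_def)
    ultimately show ?thesis using ta[OF assms vx] False by simp
  qed
qed

lemma rooted_nokeys: assumes "reachable P" "rooted P" shows "keys P = {}"
proof -
  obtain Z where Z: "standard Z" "fs\<^sup>*\<^sup>* Z P" using reach_fr[OF assms(1)] fr_def by blast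
  from Z(2) show ?thesis
  proof (cases rule: rtranclp.cases)
    case rtrancl_refl then show ?thesis using Z(1) by (simp add: standard_def)
  next
    case (rtrancl_into_rtrancl b)
    then show ?thesis using assms(2) by (auto simp: fs_def rooted_def)
  qed
qed

lemma rooted_path_H:
  assumes "rooted_path r" "valid t" "fw t"
  shows "sharp r (cls t) = of_bool (H t (tgt (last r)))"
proof -
  have "r \<noteq> []" "is_path r" "rooted (src (hd r))" using assms(1) by (auto simp: rooted_path_def)
  moreover have "valid (hd r)" using \<open>r \<noteq> []\<close> \<open>is_path r\<close> by (cases r) (auto simp: is_path_Cons)
  then have "reachable (src (hd r))" by (simp add: valid_def)
  ultimately have "keys (src (hd r)) = {}" using rooted_nokeys by blast
  then have "\<not> H t (src (hd r))" by (simp add: H_def)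
  then show ?thesis using sharp_tele[OF assms(2,3)] \<open>r \<noteq> []\<close> \<open>is_path r\<close> by simp
qed

lemma build_path: "fs\<^sup>*\<^sup>* A B \<Longrightarrow> reachable A \<Longrightarrow> A = B \<or> (\<exists>r. r \<noteq> [] \<and> is_path r \<and> src (hd r) = A \<and> tgt (last r) = B)"
proof (induction rule: converse_rtranclp_induct)
  case base then show ?case by simp
next
  case (step A C)
  then obtain z where z: "fwd A z C" by (auto simp: fs_def)
  have vx: "valid (Tr A z C True)" using step.prems z by (simp add: valid_fw)
  have "reachable C" using step.prems z reach_fwd by blast
  then have "C = B \<or> (\<exists>r. r \<noteq> [] \<and> is_path r \<and> src (hd r) = C \<and> tgt (last r) = B)" using step.IH by blast
  then show ?case
  proof
    assume "C = B"
    then show ?thesis using vx by (intro disjI2 exI[of _ "[Tr A z C True]"]) (simp add: is_path_def)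
  next
    assume "\<exists>r. r \<noteq> [] \<and> is_path r \<and> src (hd r) = C \<and> tgt (last r) = B"
    then obtain r where "r \<noteq> []" "is_path r" "src (hd r) = C" "tgt (last r) = B" by blast
    then show ?thesis using vx by (intro disjI2 exI[of _ "Tr A z C True # r"]) (simp add: is_path_Cons)
  qed
qed

lemma rooted_path_to:
  assumes "reachable P" "keys P \<noteq> {}"
  shows "\<exists>r. rooted_path r \<and> tgt (last r) = P"
proof -
  obtain Z where Z: "standard Z" "fs\<^sup>*\<^sup>* Z P" using reach_fr[OF assms(1)] fr_def by blast
  have rZ: "reachable Z" using Z(1) by (auto simp: reachable_def)
  have "Z \<noteq> P" using Z(1) assms(2) by (auto simp: standard_def)
  then obtain r where r: "r \<noteq> []" "is_path r" "src (hd r) = Z" "tgt (last r) = P"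
    using build_path[OF Z(2) rZ] by blast
  have "rooted Z" using Z(1) fwd_tgt_key by (fastforce simp: rooted_def standard_def)
  then show ?thesis using r by (auto simp: rooted_path_def)
qed

lemma past_unk:
  assumes "k' \<in> past P k"
  shows "past (unk (past P k) P) k' = past P k'"
proof -
  let ?K = "past P k"
  have dc: "x \<in> ?K" if "(x,y) \<in> (abv P)\<^sup>*" "y \<in> ?K" for x y
    using that unfolding past_def by (meson rtrancl_trans mem_Collect_eq)
  have "(x,k') \<in> (abv P \<inter> ?K \<times> ?K)\<^sup>*" if "(x,k') \<in> (abv P)\<^sup>*" for x
    using that
  proof (induction rule: converse_rtrancl_induct)
    case base then show ?case by simp
  next
    case (step y z)
    have "z \<in> ?K" using dc[OF step.hyps(2) assms] .
    moreover have "y \<in> ?K" using dc[OF r_into_rtrancl[OF step.hyps(1)] \<open>z \<in> ?K\<close>] .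
    ultimately show ?case using step by (meson IntI SigmaI converse_rtrancl_into_rtrancl)
  qed
  moreover have "(x,k') \<in> (abv P)\<^sup>*" if "(x,k') \<in> (abv P \<inter> ?K \<times> ?K)\<^sup>*" for x
    using that rtrancl_mono[of "abv P \<inter> ?K \<times> ?K" "abv P"] by blast
  ultimately show ?thesis unfolding past_def abv_unk by blast
qed

lemma past_trans: "k1 \<in> past P k2 \<Longrightarrow> past P k1 \<subseteq> past P k2"
  unfolding past_def by (auto intro: rtrancl_trans)

lemma dep_H:
  assumes f1: "fwd P0 th1 Q0" and f2: "fwd Q0 th2 S0" and d: "dep th1 th2"
    and h: "H (Tr Q0 th2 S0 True) P"
  shows "H (Tr P0 th1 Q0 True) P"
proof -
  define k1 k2 where "k1 = pkey th1" and "k2 = pkey th2"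
  have e: "(k1,k2) \<in> abv S0" using dep_abv[OF f1 f2 d] k1_def k2_def by simp
  have hk: "k2 \<in> keys P" "kcut P k2 = kcut S0 k2" using h k2_def by (auto simp: H_def)
  have "k2 \<in> past P k2" "k2 \<in> past S0 k2" by (auto simp: past_def)
  have "past P k2 = past (kcut P k2) k2" using past_unk[of k2 P k2] \<open>k2 \<in> past P k2\<close> by (simp add: kcut_def)
  also have "\<dots> = past (kcut S0 k2) k2" using hk(2) by simp
  also have "\<dots> = past S0 k2" using past_unk[of k2 S0 k2] \<open>k2 \<in> past S0 k2\<close> by (simp add: kcut_def)
  finally have K: "past P k2 = past S0 k2" .
  define K where "K = past S0 k2"
  have k1K: "k1 \<in> K" using e unfolding K_def past_def by auto
  have "k1 \<in> keys S0" using e abv_keys by blast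
  then have "k1 \<in> keys (kcut S0 k2)" using k1K K_def by (simp add: kcut_def keys_unk)
  then have "k1 \<in> keys (kcut P k2)" using hk(2) by simp
  then have k1P: "k1 \<in> keys P" by (simp add: kcut_def keys_unk)
  have "past P k1 = past (kcut P k2) k1" using past_unk[of k1 P k2] k1K K K_def by (simp add: kcut_def)
  also have "\<dots> = past (kcut S0 k2) k1" using hk(2) by simp
  also have "\<dots> = past S0 k1" using past_unk[of k1 S0 k2] k1K K_def by (simp add: kcut_def)
  finally have K1: "past P k1 = past S0 k1" .
  have sub: "past S0 k1 \<subseteq> K" using past_trans k1K K_def by blast
  have "kcut P k1 = unk (past S0 k1) P" using K1 by (simp add: kcut_def)
  also have "\<dots> = unk (past S0 k1) (unk K P)" using sub by (simp add: unk_unk Int_absorb2)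
  also have "\<dots> = unk (past S0 k1) (unk K S0)" using hk(2) K K_def by (simp add: kcut_def)
  also have "\<dots> = kcut S0 k1" using sub by (simp add: unk_unk Int_absorb2 kcut_def)
  also have "\<dots> = kcut Q0 k1" using cut_fwd[OF f2] fwd_tgt_key[OF f1] k1_def by simp
  finally show ?thesis using k1P k1_def by (simp add: H_def)
qed

lemma cls_eq: "ev_eq a t \<Longrightarrow> cls a = cls t"
  unfolding cls_def by (auto intro: ev_eq.sym ev_eq.trans)

theorem lemma7p2:
  fixes e1 e2 :: "'n tr set"
  assumes "fwd_event e1" and "fwd_event e2" and "ev_composable e1 e2"
  shows "ev_less e1 e2 \<longleftrightarrow> ev_dep e1 e2"
proof -
  obtain a where a: "valid a" "fw a" "e1 = cls a" using assms(1) fwd_event_def by blast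
  obtain b where b: "valid b" "fw b" "e2 = cls b" using assms(2) fwd_event_def by blast
  obtain t1 t2 where tt: "t1 \<in> e1" "t2 \<in> e2" "tgt t1 = src t2" using assms(3) ev_composable_def by blast
  have at: "ev_eq a t1" "ev_eq b t2" using tt a b by (auto simp: cls_def)
  have e1: "e1 = cls t1" and e2: "e2 = cls t2" using cls_eq at a b by auto
  have vt: "valid t1" "fw t1" "valid t2" "fw t2" using ev_eq_props[OF at(1)] ev_eq_props[OF at(2)] a b by auto
  obtain P0 th1 Q0 where t1: "t1 = Tr P0 th1 Q0 True" using vt(2) by (cases t1) auto
  obtain S0 th2 where t2: "t2 = Tr Q0 th2 S0 True" using vt(4) tt(3) t1 by (cases t2) auto
  have f1: "fwd P0 th1 Q0" and rP0: "reachable P0" using vt(1) t1 by (auto simp: valid_fw)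
  have f2: "fwd Q0 th2 S0" using vt(3) t2 by (auto simp: valid_fw)
  have kk: "pkey th1 \<noteq> pkey th2" using fwd_keys[OF f1] fwd_keys[OF f2] by auto
  have lab1: "lbl y = th1" if "y \<in> e1" for y
    using that e1 t1 ev_eq_props[of t1 y] by (auto simp: cls_def)
  have lab2: "lbl y = th2" if "y \<in> e2" for y
    using that e2 t2 ev_eq_props[of t2 y] by (auto simp: cls_def)
  have dep_iff: "ev_dep e1 e2 \<longleftrightarrow> dep th1 th2"
    using lab1 lab2 tt unfolding ev_dep_def by blast
  show ?thesis
  proof
    assume less: "ev_less e1 e2"
    show "ev_dep e1 e2"
    proof (rule ccontr)
      assume "\<not> ev_dep e1 e2"
      then have "\<not> dep th1 th2" using dep_iff by simp
      then obtain R where R: "fwd P0 th2 R" "fwd R th1 S0" using swap[OF f1 f2] by blast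
      have rR: "reachable R" using rP0 R(1) reach_fwd by blast
      have k2R: "pkey th2 \<in> keys R" using fwd_tgt_key[OF R(1)] .
      obtain r where r: "rooted_path r" "tgt (last r) = R" using rooted_path_to[OF rR] k2R by blast
      have "H t2 R" using t2 k2R cut_fwd[OF R(2) k2R] by (simp add: H_def)
      then have s2: "sharp r e2 = 1" using rooted_path_H[OF r(1) vt(3,4)] r(2) e2 by simp
      have "pkey th1 \<notin> keys R" using fwd_keys[OF R(1)] fwd_keys[OF f1] kk by auto
      then have "\<not> H t1 R" using t1 by (simp add: H_def)
      then have s1: "sharp r e1 = 0" using rooted_path_H[OF r(1) vt(1,2)] r(2) e1 by simp
      show False using less s1 s2 r(1) unfolding ev_less_def ev_le_def by force
    qed
  next
    assume "ev_dep e1 e2"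
    then have d: "dep th1 th2" using dep_iff by simp
    have le: "ev_le e1 e2"
      unfolding ev_le_def
    proof (intro allI impI)
      fix r assume r: "rooted_path r" "sharp r e2 > 0"
      then have "H t2 (tgt (last r))" using rooted_path_H[OF r(1) vt(3,4)] e2 by simp
      then have "H t1 (tgt (last r))" using dep_H[OF f1 f2 d] t1 t2 by simp
      then show "sharp r e1 > 0" using rooted_path_H[OF r(1) vt(1,2)] e1 by simp
    qed
    have "e1 \<noteq> e2"
    proof
      assume "e1 = e2"
      then have "t1 \<in> e2" using tt by simp
      then have "lbl t1 = th2" using lab2 by blast
      then show False using t1 kk by simp
    qed
    then show "ev_less e1 e2" using le by (simp add: ev_less_def)
  qed
qed

end
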